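(* Consider the BSSC with parameters $(\alpha,\beta)\in[0,1]^2$, $\alpha+\beta\neq1$, used with feedback and without transmission cost. Let $$\mu=\frac{H(\beta)-H(\alpha)}{1-\alpha-\beta},\qquad\lambda=\frac{1}{1+2^{\mu}},\qquad\nu=\frac{1-(1-\beta)(1+2^{\mu})}{(\alpha+\beta-1)(1+2^{\mu})}.$$ (a) For every $n\ge0$ and every initial state $b_{-1}\in\{0,1\}$, the supremum in $C^{FB,BSSC}_{A^n\to B^n}$ is attained by the time-invariant input distribution $\pi_i(a_i|a^{i-1},b^{i-1})=\pi^{TI}(a_i|b_{i-1})$ for all $i=0,\dots,n$, where $\pi^{TI}(a|b)=\nu$ if $a=b$ and $1-\nu$ if $a\ne b$; the corresponding channel output transition is $\mathbf P(b_i|b^{i-1})=\mathbf P^{TI}(b_i|b_{i-1})$ with $\mathbf P^{TI}(b'|b)=\lambda$ if $b'=b$ and $1-\lambda$ if $b'\ne b$. Moreover $$C^{FB,BSSC}_{A^n\to B^n}=(n+1)\max_{\pi(\cdot|b_{-1})}I(A_0;B_0|B_{-1}=b_{-1})=(n+1)\big[H(\lambda)-\nu H(\alpha)-(1-\nu)H(\beta)\big]\quad\forall b_{-1}\in\{0,1\}.$$ (b) The feedback capacity $C^{FB,BSSC}_{A^\infty\to B^\infty}=\lim_{n\to\infty}\frac1{n+1}C^{FB,BSSC}_{A^n\to B^n}$ equals $H(\lambda)-\nu H(\alpha)-(1-\nu)H(\beta)=\max_{\pi(\cdot|b_{-1})}I(A_0;B_0|B_{-1}=b_{-1})$ for every $b_{-1}$,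 and is independent of the initial state.
   Context: The Binary State Symmetric Channel BSSC$(\alpha,\beta)$ has $\mathbb A=\mathbb B=\{0,1\}$ and time-invariant transition probabilities $\mathbf P(b_i|a_i,b_{i-1})$ given by $\mathbf P(b_i=a_i|a_i,b_{i-1})=\alpha$ if $a_i=b_{i-1}$ and $\mathbf P(b_i=a_i|a_i,b_{i-1})=\beta$ if $a_i\ne b_{i-1}$ (i.e. $\mathbf P(0|0,0)=\alpha$, $\mathbf P(0|0,1)=\beta$, $\mathbf P(0|1,0)=1-\beta$, $\mathbf P(0|1,1)=1-\alpha$, where the conditioning is on $(a_i,b_{i-1})$). $H(x)=-x\log_2x-(1-x)\log_2(1-x)$ is the binary entropy. With the initial state $B_{-1}=b_{-1}$ fixed and known to encoder and decoder, $C^{FB,BSSC}_{A^n\to B^n}=\sup\sum_{i=0}^nI(A^i;B_i|B^{i-1})$, the supremum over all feedback input distributions $\{\mathbf P(a_i|a^{i-1},b^{i-1})\}_{i=0}^n$. $I(A_0;B_0|B_{-1}=b_{-1})$ is evaluated with $A_0\sim\pi(\cdot|b_{-1})$ and $B_0\sim\mathbf P(\cdot|A_0,b_{-1})$. *)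

theory Defs
  imports Complex_Main
begin

text \<open>Binary alphabet {0,1} is represented by bool (False = 0, True = 1).
  Logarithms are base 2, with the convention 0 log 0 = 0.\<close>

definition xlog2 :: "real \<Rightarrow> real" where
  "xlog2 t = (if t = 0 then 0 else t * log 2 t)"

definition Hb :: "real \<Rightarrow> real" where
  "Hb x = - xlog2 x - xlog2 (1 - x)"

definition bssc :: "real \<Rightarrow> real \<Rightarrow> bool \<Rightarrow> bool \<Rightarrow> bool \<Rightarrow> real" where
  "bssc \<alpha> \<beta> a bprev b =
     (if b = a then (if a = bprev then \<alpha> else \<beta>)
      else (if a = bprev then 1 - \<alpha> else 1 - \<beta>))"

text \<open>A feedback input policy: pol i as bs a = P(A_i = a | A^{i-1} = as, B^{i-1} = bs),
  where as, bs have length i.\<close>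
type_synonym policy = "nat \<Rightarrow> bool list \<Rightarrow> bool list \<Rightarrow> bool \<Rightarrow> real"

definition valid_policy :: "policy \<Rightarrow> bool" where
  "valid_policy pol \<longleftrightarrow>
     (\<forall>i as bs. length as = i \<and> length bs = i \<longrightarrow>
        (\<forall>a. 0 \<le> pol i as bs a) \<and> pol i as bs True + pol i as bs False = 1)"

definition prevb :: "bool \<Rightarrow> bool list \<Rightarrow> nat \<Rightarrow> bool" where
  "prevb b0 bs j = (if j = 0 then b0 else bs ! (j - 1))"

text \<open>Joint probability P(A^k = as, B^k = bs | B_{-1} = b0), length as = length bs = k+1.\<close>
definition joint :: "real \<Rightarrow> real \<Rightarrow> policy \<Rightarrow> bool \<Rightarrow> bool list \<Rightarrow> bool list \<Rightarrow> real" where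
  "joint \<alpha> \<beta> pol b0 as bs =
     (\<Prod>j<length as. pol j (take j as) (take j bs) (as ! j) * bssc \<alpha> \<beta> (as ! j) (prevb b0 bs j) (bs ! j))"

definition blists :: "nat \<Rightarrow> bool list set" where
  "blists k = {xs. length xs = k}"

definition pB :: "real \<Rightarrow> real \<Rightarrow> policy \<Rightarrow> bool \<Rightarrow> bool list \<Rightarrow> real" where
  "pB \<alpha> \<beta> pol b0 bs = (\<Sum>as\<in>blists (length bs). joint \<alpha> \<beta> pol b0 as bs)"

text \<open>Marginal P(A^i = as, B^{i-1} = bs'), length as = i+1, length bs' = i.\<close>
definition pAB' :: "real \<Rightarrow> real \<Rightarrow> policy \<Rightarrow> bool \<Rightarrow> bool list \<Rightarrow> bool list \<Rightarrow> real" where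
  "pAB' \<alpha> \<beta> pol b0 as bs' = (\<Sum>b\<in>UNIV. joint \<alpha> \<beta> pol b0 as (bs' @ [b]))"

text \<open>Conditional mutual information I(A^i; B_i | B^{i-1}) given B_{-1} = b0.\<close>
definition cmi :: "real \<Rightarrow> real \<Rightarrow> policy \<Rightarrow> bool \<Rightarrow> nat \<Rightarrow> real" where
  "cmi \<alpha> \<beta> pol b0 i =
     (\<Sum>as\<in>blists (Suc i). \<Sum>bs\<in>blists (Suc i).
        (let p = joint \<alpha> \<beta> pol b0 as bs in
         if p = 0 then 0
         else p * log 2 ((p * pB \<alpha> \<beta> pol b0 (butlast bs)) /
                         (pAB' \<alpha> \<beta> pol b0 as (butlast bs) * pB \<alpha> \<beta> pol b0 bs))))"

definition dirinfo :: "real \<Rightarrow> real \<Rightarrow> policy \<Rightarrow> bool \<Rightarrow> nat \<Rightarrow> real" where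
  "dirinfo \<alpha> \<beta> pol b0 n = (\<Sum>i\<le>n. cmi \<alpha> \<beta> pol b0 i)"

definition CFB :: "real \<Rightarrow> real \<Rightarrow> nat \<Rightarrow> bool \<Rightarrow> real" where
  "CFB \<alpha> \<beta> n b0 = (SUP pol\<in>{pol. valid_policy pol}. dirinfo \<alpha> \<beta> pol b0 n)"

text \<open>I(A_0; B_0 | B_{-1} = b0) with A_0 ~ pi(.|b0), where p = pi(1|b0).\<close>
definition I0 :: "real \<Rightarrow> real \<Rightarrow> bool \<Rightarrow> real \<Rightarrow> real" where
  "I0 \<alpha> \<beta> b0 p = cmi \<alpha> \<beta> (\<lambda>_ _ _ a. if a then p else 1 - p) b0 0"

definition bssc_mu :: "real \<Rightarrow> real \<Rightarrow> real" where
  "bssc_mu \<alpha> \<beta> = (Hb \<beta> - Hb \<alpha>) / (1 - \<alpha> - \<beta>)"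

definition bssc_lambda :: "real \<Rightarrow> real \<Rightarrow> real" where
  "bssc_lambda \<alpha> \<beta> = 1 / (1 + 2 powr bssc_mu \<alpha> \<beta>)"

definition bssc_nu :: "real \<Rightarrow> real \<Rightarrow> real" where
  "bssc_nu \<alpha> \<beta> = (1 - (1 - \<beta>) * (1 + 2 powr bssc_mu \<alpha> \<beta>)) /
                   ((\<alpha> + \<beta> - 1) * (1 + 2 powr bssc_mu \<alpha> \<beta>))"

definition piTI :: "real \<Rightarrow> real \<Rightarrow> bool \<Rightarrow> policy" where
  "piTI \<alpha> \<beta> b0 i as bs a =
     (if a = prevb b0 bs i then bssc_nu \<alpha> \<beta> else 1 - bssc_nu \<alpha> \<beta>)"

definition PTI :: "real \<Rightarrow> real \<Rightarrow> bool \<Rightarrow> bool \<Rightarrow> real" where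
  "PTI \<alpha> \<beta> b b' = (if b' = b then bssc_lambda \<alpha> \<beta> else 1 - bssc_lambda \<alpha> \<beta>)"

definition bssc_cap :: "real \<Rightarrow> real \<Rightarrow> real" where
  "bssc_cap \<alpha> \<beta> = Hb (bssc_lambda \<alpha> \<beta>) - bssc_nu \<alpha> \<beta> * Hb \<alpha> - (1 - bssc_nu \<alpha> \<beta>) * Hb \<beta>"

end

theory Submission
  imports Defs
begin


lemma ln_strict: "0 < (x::real) \<Longrightarrow> x \<noteq> 1 \<Longrightarrow> ln x < x - 1"
  using ln_eq_minus_one[of x] ln_le_minus_one[of x] by fastforce

lemma log2_le: "0 < x \<Longrightarrow> log 2 x \<le> (x - 1) / ln 2"
  unfolding log_def using ln_le_minus_one[of x] by (simp add: divide_right_mono)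

lemma xlog_term_ge:
  assumes "0 \<le> v" "0 < u"
  shows "xlog2 v - v * log 2 u \<ge> (v - u) / ln 2"
proof (cases "v = 0")
  case True then show ?thesis using assms by (simp add: xlog2_def)
next
  case False
  hence v: "v > 0" using assms by simp
  have "ln (u / v) \<le> u / v - 1" using ln_le_minus_one[of "u/v"] v assms by simp
  hence "v * ln (u/v) \<le> u - v" using v by (simp add: field_simps)
  hence "v * (ln u - ln v) \<le> u - v" using v assms by (simp add: ln_div)
  moreover have "xlog2 v - v * log 2 u = v * (ln v - ln u) / ln 2"
    using v by (simp add: xlog2_def log_def field_simps)
  ultimately show ?thesis by (simp add: divide_right_mono algebra_simps)
qed

lemma xlog_term_gt:
  assumes "0 \<le> v" "0 < u" "v \<noteq> u"
  shows "xlog2 v - v * log 2 u > (v - u) / ln 2"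
proof (cases "v = 0")
  case True then show ?thesis using assms by (simp add: xlog2_def)
next
  case False
  hence v: "v > 0" using assms by simp
  have "ln (u / v) < u / v - 1" using ln_strict[of "u/v"] v assms by simp
  hence "v * ln (u/v) < u - v" using v by (simp add: field_simps)
  hence "v * (ln u - ln v) < u - v" using v assms by (simp add: ln_div)
  moreover have "xlog2 v - v * log 2 u = v * (ln v - ln u) / ln 2"
    using v by (simp add: xlog2_def log_def field_simps)
  ultimately show ?thesis by (simp add: divide_strict_right_mono algebra_simps)
qed

definition kl :: "real \<Rightarrow> real \<Rightarrow> real" where
  "kl v c = - Hb v - v * log 2 c - (1 - v) * log 2 (1 - c)"

lemma kl_pos:
  assumes "0 \<le> v" "v \<le> 1" "0 < u" "u < 1" "v \<noteq> u"
  shows "kl v u > 0"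
proof -
  have 1: "xlog2 v - v * log 2 u > (v - u) / ln 2" using xlog_term_gt assms by simp
  have 2: "xlog2 (1-v) - (1-v) * log 2 (1-u) \<ge> ((1-v) - (1-u)) / ln 2"
    using xlog_term_ge[of "1-v" "1-u"] assms by simp
  have "(v - u) / ln 2 + ((1-v) - (1-u)) / ln 2 = 0" by (simp add: field_simps)
  with 1 2 show ?thesis unfolding kl_def Hb_def by linarith
qed

lemma Hb_int: "0 < u \<Longrightarrow> u < 1 \<Longrightarrow> Hb u = - u * log 2 u - (1-u) * log 2 (1-u)"
  by (simp add: Hb_def xlog2_def)

lemma kl_split:
  assumes "0 < u" "u < 1" "0 < c" "c < 1"
  shows "kl v c - kl u c = kl v u + (v - u) * (log 2 u - log 2 c - log 2 (1-u) + log 2 (1-c))"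
  using Hb_int[OF assms(1,2)] unfolding kl_def by (simp add: algebra_simps)

lemma kl_between:
  assumes "0 \<le> v" "v \<le> 1" "0 < c" "c < 1"
    and btw: "(v < u \<and> u < c) \<or> (c < u \<and> u < v)"
  shows "kl v c > kl u c"
proof -
  have u: "0 < u" "u < 1" using btw assms by auto
  have "kl v u > 0" using kl_pos assms u btw by auto
  moreover have "(v - u) * (log 2 u - log 2 c - log 2 (1-u) + log 2 (1-c)) \<ge> 0"
  proof (cases "v < u \<and> u < c")
    case True
    have "log 2 u < log 2 c" using True u by simp
    moreover have "log 2 (1-c) < log 2 (1-u)" using True assms by simp
    ultimately show ?thesis using True by (intro mult_nonpos_nonpos) auto
  next
    case False
    hence F: "c < u \<and> u < v" using btw by auto
    have "log 2 u > log 2 c" using F assms by simp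
    moreover have "log 2 (1-c) > log 2 (1-u)" using F u by simp
    ultimately show ?thesis using F by (intro mult_nonneg_nonneg) auto
  qed
  ultimately show ?thesis using kl_split[OF u assms(3,4), of v] by linarith
qed



locale bsscp =
  fixes \<alpha> \<beta> :: real
  assumes a0: "0 \<le> \<alpha>" and a1: "\<alpha> \<le> 1" and b0: "0 \<le> \<beta>" and b1: "\<beta> \<le> 1"
    and ab: "\<alpha> + \<beta> \<noteq> 1"
begin

abbreviation "mu \<equiv> bssc_mu \<alpha> \<beta>"
abbreviation "lam \<equiv> bssc_lambda \<alpha> \<beta>"
abbreviation "nu \<equiv> bssc_nu \<alpha> \<beta>"
abbreviation "cap \<equiv> bssc_cap \<alpha> \<beta>"

lemma T_pos: "1 + 2 powr mu > 0" by (simp add: add_pos_pos)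

lemma lam_pos: "0 < lam" "lam < 1"
  unfolding bssc_lambda_def using T_pos by auto

lemma one_minus_lam: "1 - lam = 2 powr mu / (1 + 2 powr mu)"
  unfolding bssc_lambda_def using T_pos by (simp add: field_simps)

lemma lam_eq: "lam = nu * (\<alpha> + \<beta> - 1) + 1 - \<beta>"
proof -
  have d: "\<alpha> + \<beta> - 1 \<noteq> 0" using ab by simp
  define T where "T = 1 + 2 powr mu"
  have T: "T > 0" unfolding T_def using T_pos .
  have "nu = (1 - (1 - \<beta>) * T) / ((\<alpha> + \<beta> - 1) * T)"
    unfolding bssc_nu_def T_def ..
  hence "nu * (\<alpha> + \<beta> - 1) = (1 - (1 - \<beta>) * T) / T" using d by simp
  also have "\<dots> = 1 / T - (1 - \<beta>)" using T by (simp add: diff_divide_distrib)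
  finally show ?thesis unfolding bssc_lambda_def T_def[symmetric] by simp
qed

lemma H_diff: "Hb \<beta> - Hb \<alpha> = (1 - \<alpha> - \<beta>) * mu"
proof -
  have "1 - \<alpha> - \<beta> \<noteq> 0" using ab by simp
  then show ?thesis unfolding bssc_mu_def by simp
qed

lemma log_lam: "log 2 lam = - log 2 (1 + 2 powr mu)"
  unfolding bssc_lambda_def using T_pos by (simp add: log_divide)

lemma log_1lam: "log 2 (1 - lam) = mu - log 2 (1 + 2 powr mu)"
  unfolding one_minus_lam using T_pos by (simp add: log_divide)

lemma Hb_sym: "Hb (1 - x) = Hb x" unfolding Hb_def by simp

lemma kl1: "kl \<alpha> lam = - Hb \<alpha> + log 2 (1 + 2 powr mu) - (1 - \<alpha>) * mu"
  unfolding kl_def log_lam log_1lam by (simp add: algebra_simps)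

lemma kl2: "kl (1 - \<beta>) lam = - Hb \<beta> + log 2 (1 + 2 powr mu) - \<beta> * mu"
  unfolding kl_def log_lam log_1lam Hb_sym by (simp add: algebra_simps)

lemma Hlam: "Hb lam = log 2 (1 + 2 powr mu) - (1 - lam) * mu"
  using Hb_int[OF lam_pos] unfolding log_lam log_1lam by (simp add: algebra_simps)

lemma kl2_cap: "kl (1 - \<beta>) lam = cap"
proof -
  have "cap - kl (1 - \<beta>) lam = - (1 - lam) * mu + nu * (Hb \<beta> - Hb \<alpha>) + \<beta> * mu"
    unfolding bssc_cap_def kl2 Hlam by (simp add: algebra_simps)
  also have "\<dots> = mu * (lam - 1 + nu * (1 - \<alpha> - \<beta>) + \<beta>)"
    unfolding H_diff by (simp add: algebra_simps)
  also have "\<dots> = 0" unfolding lam_eq by (simp add: algebra_simps)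
  finally show ?thesis by simp
qed

lemma kl1_cap: "kl \<alpha> lam = cap"
proof -
  have "kl \<alpha> lam - kl (1 - \<beta>) lam = (Hb \<beta> - Hb \<alpha>) - (1 - \<alpha> - \<beta>) * mu"
    unfolding kl1 kl2 by (simp add: algebra_simps)
  also have "\<dots> = 0" unfolding H_diff by simp
  finally show ?thesis using kl2_cap by simp
qed

lemma nu_range: "0 \<le> nu" "nu \<le> 1"
proof -
  have eq: "kl \<alpha> lam = kl (1 - \<beta>) lam" using kl1_cap kl2_cap by simp
  have ne: "\<alpha> \<noteq> 1 - \<beta>" using ab by auto
  have L: "lam = (1 - \<beta>) + nu * (\<alpha> - (1 - \<beta>))" using lam_eq by (simp add: algebra_simps)
  show "0 \<le> nu"
  proof (rule ccontr)
    assume "\<not> 0 \<le> nu"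
    hence n: "nu < 0" by simp
    have "(\<alpha> < 1 - \<beta> \<and> 1 - \<beta> < lam) \<or> (lam < 1 - \<beta> \<and> 1 - \<beta> < \<alpha>)"
    proof (cases "\<alpha> < 1 - \<beta>")
      case True
      have "nu * (\<alpha> - (1 - \<beta>)) > 0" using n True by (intro mult_neg_neg) auto
      then show ?thesis using True L by auto
    next
      case False
      hence F: "\<alpha> > 1 - \<beta>" using ne by auto
      have "nu * (\<alpha> - (1 - \<beta>)) < 0" using n F by (intro mult_neg_pos) auto
      then show ?thesis using F L by auto
    qed
    hence "kl \<alpha> lam > kl (1 - \<beta>) lam" using kl_between a0 a1 lam_pos by blast
    with eq show False by simp
  qed
  show "nu \<le> 1"
  proof (rule ccontr)
    assume "\<not> nu \<le> 1"
    hence n: "nu - 1 > 0" by simp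
    have L2: "lam = \<alpha> + (nu - 1) * (\<alpha> - (1 - \<beta>))" using L by (simp add: algebra_simps)
    have "(1 - \<beta> < \<alpha> \<and> \<alpha> < lam) \<or> (lam < \<alpha> \<and> \<alpha> < 1 - \<beta>)"
    proof (cases "\<alpha> < 1 - \<beta>")
      case True
      have "(nu - 1) * (\<alpha> - (1 - \<beta>)) < 0" using n True by (intro mult_pos_neg) auto
      then show ?thesis using True L2 by auto
    next
      case False
      hence F: "\<alpha> > 1 - \<beta>" using ne by auto
      have "(nu - 1) * (\<alpha> - (1 - \<beta>)) > 0" using n F by (intro mult_pos_pos) auto
      then show ?thesis using F L2 by auto
    qed
    hence "kl (1 - \<beta>) lam > kl \<alpha> lam" using kl_between[of "1 - \<beta>" lam \<alpha>] b0 b1 lam_pos by simp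
    with eq show False by simp
  qed
qed

end


lemma blists_0: "blists 0 = {[]}" by (auto simp: blists_def)

lemma blists_Suc: "blists (Suc k) = (\<lambda>(xs, x). xs @ [x]) ` (blists k \<times> UNIV)"
proof
  show "blists (Suc k) \<subseteq> (\<lambda>(xs, x). xs @ [x]) ` (blists k \<times> UNIV)"
  proof
    fix ys assume "ys \<in> blists (Suc k)"
    hence l: "length ys = Suc k" by (simp add: blists_def)
    hence "ys = butlast ys @ [last ys]" by (metis append_butlast_last_id list.size(3) nat.distinct(1))
    moreover have "butlast ys \<in> blists k" using l by (simp add: blists_def)
    ultimately show "ys \<in> (\<lambda>(xs, x). xs @ [x]) ` (blists k \<times> UNIV)"
      by (metis (no_types, lifting) SigmaI UNIV_I case_prod_conv image_eqI)
  qed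
qed (auto simp: blists_def)

lemma finite_blists: "finite (blists k)"
  by (induction k) (auto simp: blists_0 blists_Suc)

lemma inj_snoc: "inj_on (\<lambda>(xs, x). xs @ [x]) A"
  by (auto simp: inj_on_def)

lemma sum_blists_Suc:
  "(\<Sum>xs\<in>blists (Suc k). f xs) = (\<Sum>xs\<in>blists k. \<Sum>x\<in>UNIV. f (xs @ [x]))"
  unfolding blists_Suc
  by (subst sum.reindex[OF inj_snoc]) (simp add: sum.cartesian_product prod.case_distrib)

lemma sum_bool: "(\<Sum>x\<in>UNIV. f x) = f True + (f False :: real)"
  by (simp add: UNIV_bool)

context bsscp
begin

lemma bssc_nonneg: "0 \<le> bssc \<alpha> \<beta> a s b"
  using a0 a1 b0 b1 by (simp add: bssc_def)

lemma bssc_sum: "bssc \<alpha> \<beta> a s True + bssc \<alpha> \<beta> a s False = 1"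
  by (simp add: bssc_def)

lemma PTI_pos: "0 < PTI \<alpha> \<beta> s b"
  using lam_pos by (simp add: PTI_def)

lemma PTI_sum: "PTI \<alpha> \<beta> s True + PTI \<alpha> \<beta> s False = 1"
  by (simp add: PTI_def)

definition gg :: "real \<Rightarrow> real \<Rightarrow> real" where
  "gg w c = (if w = 0 then 0 else w * log 2 (w / c))"

lemma gg_eq: "0 < c \<Longrightarrow> gg w c = xlog2 w - w * log 2 c"
  by (simp add: gg_def xlog2_def log_divide algebra_simps)

definition phi :: "bool \<Rightarrow> bool \<Rightarrow> bool \<Rightarrow> real" where
  "phi a s b = gg (bssc \<alpha> \<beta> a s b) (PTI \<alpha> \<beta> s b)"

lemma bool_sum_swap: "f True + f False = f a + (f (\<not> a) :: real)"
  by (cases a) auto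

lemma phi_sum: "phi a s True + phi a s False = cap"
proof -
  have l: "0 < lam" "0 < 1 - lam" using lam_pos by auto
  have "phi a s True + phi a s False = phi a s a + phi a s (\<not> a)" by (rule bool_sum_swap)
  also have "\<dots> = (if a = s then kl \<alpha> lam else kl (1 - \<beta>) lam)"
  proof (cases "a = s")
    case True
    then show ?thesis unfolding phi_def bssc_def PTI_def kl_def Hb_def
      using l by (simp add: gg_eq algebra_simps)
  next
    case False
    then show ?thesis unfolding phi_def bssc_def PTI_def kl_def Hb_def
      using l by (simp add: gg_eq algebra_simps)
  qed
  finally show ?thesis using kl1_cap kl2_cap by simp
qed

context
  fixes pol :: policy and b :: bool
  assumes vp: "valid_policy pol"
begin

abbreviation "J \<equiv> joint \<alpha> \<beta> pol b"
abbreviation "P \<equiv> pB \<alpha> \<beta> pol b"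

lemma pol_nonneg: "length as = i \<Longrightarrow> length bs = i \<Longrightarrow> 0 \<le> pol i as bs x"
  using vp unfolding valid_policy_def by blast

lemma pol_sum: "length as = i \<Longrightarrow> length bs = i \<Longrightarrow> pol i as bs True + pol i as bs False = 1"
  using vp unfolding valid_policy_def by blast

lemma joint_snoc:
  assumes "length as = i" "length bs = i"
  shows "J (as @ [x]) (bs @ [y]) = J as bs * (pol i as bs x * bssc \<alpha> \<beta> x (prevb b bs i) y)"
proof -
  have "J (as @ [x]) (bs @ [y]) =
     (\<Prod>j<i. pol j (take j (as@[x])) (take j (bs@[y])) ((as@[x]) ! j) *
             bssc \<alpha> \<beta> ((as@[x]) ! j) (prevb b (bs@[y]) j) ((bs@[y]) ! j)) *
     (pol i (take i (as@[x])) (take i (bs@[y])) ((as@[x]) ! i) *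
             bssc \<alpha> \<beta> ((as@[x]) ! i) (prevb b (bs@[y]) i) ((bs@[y]) ! i))"
    unfolding joint_def using assms by (simp add: prod.lessThan_Suc)
  also have "(\<Prod>j<i. pol j (take j (as@[x])) (take j (bs@[y])) ((as@[x]) ! j) *
             bssc \<alpha> \<beta> ((as@[x]) ! j) (prevb b (bs@[y]) j) ((bs@[y]) ! j)) = J as bs"
    unfolding joint_def using assms
    by (intro prod.cong) (auto simp: nth_append prevb_def)
  finally show ?thesis using assms by (simp add: prevb_def nth_append)
qed

lemma joint_nonneg: "length as = length bs \<Longrightarrow> 0 \<le> J as bs"
  unfolding joint_def
  by (intro prod_nonneg ballI mult_nonneg_nonneg bssc_nonneg pol_nonneg) auto

lemma joint_total: "(\<Sum>as\<in>blists k. \<Sum>bs\<in>blists k. J as bs) = 1"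
proof (induction k)
  case 0 then show ?case by (simp add: blists_0 joint_def)
next
  case (Suc k)
  have "(\<Sum>as\<in>blists (Suc k). \<Sum>bs\<in>blists (Suc k). J as bs)
      = (\<Sum>as\<in>blists k. \<Sum>x\<in>UNIV. \<Sum>bs\<in>blists k. \<Sum>y\<in>UNIV. J (as@[x]) (bs@[y]))"
    by (simp add: sum_blists_Suc)
  also have "\<dots> = (\<Sum>as\<in>blists k. \<Sum>bs\<in>blists k. J as bs)"
  proof (rule sum.cong[OF refl])
    fix as assume as: "as \<in> blists k"
    have "(\<Sum>x\<in>UNIV. \<Sum>bs\<in>blists k. \<Sum>y\<in>UNIV. J (as@[x]) (bs@[y]))
        = (\<Sum>bs\<in>blists k. \<Sum>x\<in>UNIV. \<Sum>y\<in>UNIV. J (as@[x]) (bs@[y]))"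
      by (rule sum.swap)
    also have "\<dots> = (\<Sum>bs\<in>blists k. J as bs)"
    proof (rule sum.cong[OF refl])
      fix bs assume bs: "bs \<in> blists k"
      have la: "length as = k" and lb: "length bs = k" using as bs by (auto simp: blists_def)
      show "(\<Sum>x\<in>UNIV. \<Sum>y\<in>UNIV. J (as@[x]) (bs@[y])) = J as bs"
      proof -
        have "\<And>x. (\<Sum>y\<in>UNIV. J (as@[x]) (bs@[y])) = J as bs * pol k as bs x"
        proof -
          fix x
          have "(\<Sum>y\<in>UNIV. J (as@[x]) (bs@[y])) = J as bs * (pol k as bs x *
                 (bssc \<alpha> \<beta> x (prevb b bs k) True + bssc \<alpha> \<beta> x (prevb b bs k) False))"
            unfolding sum_bool joint_snoc[OF la lb] by (simp add: distrib_left)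
          then show "(\<Sum>y\<in>UNIV. J (as@[x]) (bs@[y])) = J as bs * pol k as bs x"
            by (simp add: bssc_sum)
        qed
        then have "(\<Sum>x\<in>UNIV. \<Sum>y\<in>UNIV. J (as@[x]) (bs@[y])) = J as bs * (pol k as bs True + pol k as bs False)"
          by (simp add: sum_bool distrib_left)
        then show ?thesis using pol_sum[OF la lb] by simp
      qed
    qed
    finally show "(\<Sum>x\<in>UNIV. \<Sum>bs\<in>blists k. \<Sum>y\<in>UNIV. J (as@[x]) (bs@[y])) = (\<Sum>bs\<in>blists k. J as bs)" .
  qed
  also have "\<dots> = 1" by (rule Suc.IH)
  finally show ?case .
qed

lemma pB_total: "(\<Sum>bs\<in>blists k. P bs) = 1"
proof -
  have "(\<Sum>bs\<in>blists k. P bs) = (\<Sum>bs\<in>blists k. \<Sum>as\<in>blists k. J as bs)"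
    by (intro sum.cong) (auto simp: pB_def blists_def)
  also have "\<dots> = 1" by (subst sum.swap) (rule joint_total)
  finally show ?thesis .
qed

end
end


context bsscp
begin

context
  fixes pol :: policy and b :: bool
  assumes vp: "valid_policy pol"
begin

abbreviation "JJ \<equiv> joint \<alpha> \<beta> pol b"
abbreviation "PP \<equiv> pB \<alpha> \<beta> pol b"
abbreviation "PA \<equiv> pAB' \<alpha> \<beta> pol b"

lemma J_le_P: "length as = length bs \<Longrightarrow> JJ as bs \<le> PP bs"
  unfolding pB_def using finite_blists[of "length bs"]
  by (intro member_le_sum) (auto simp: blists_def intro!: joint_nonneg[OF vp])

lemma P_nonneg: "0 \<le> PP bs"
  unfolding pB_def by (intro sum_nonneg) (auto simp: blists_def intro!: joint_nonneg[OF vp])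

lemma PA_snoc: "length as = i \<Longrightarrow> length bs = i \<Longrightarrow> PA (as@[x]) bs = JJ as bs * pol i as bs x"
  unfolding pAB'_def sum_bool using vp
  by (simp add: joint_snoc distrib_left[symmetric] bssc_sum)

lemma P_snoc: "length bs = i \<Longrightarrow> PP (bs@[y]) = (\<Sum>as\<in>blists i. \<Sum>x\<in>UNIV. JJ (as@[x]) (bs@[y]))"
  unfolding pB_def by (simp add: sum_blists_Suc)

definition FF :: "bool list \<Rightarrow> bool list \<Rightarrow> real" where
  "FF as bs = (let p = JJ as bs in
         if p = 0 then 0
         else p * log 2 ((p * PP (butlast bs)) / (PA as (butlast bs) * PP bs)))"

lemma cmi_FF: "cmi \<alpha> \<beta> pol b i = (\<Sum>as\<in>blists (Suc i). \<Sum>bs\<in>blists (Suc i). FF as bs)"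
  unfolding cmi_def FF_def ..

definition T1 :: "nat \<Rightarrow> bool list \<Rightarrow> bool list \<Rightarrow> real" where
  "T1 i as bs = PA as (butlast bs) * phi (last as) (prevb b (butlast bs) i) (last bs)"

definition T2 :: "nat \<Rightarrow> bool list \<Rightarrow> bool list \<Rightarrow> real" where
  "T2 i as bs = (JJ as bs * PTI \<alpha> \<beta> (prevb b (butlast bs) i) (last bs) * PP (butlast bs) / PP bs
                 - JJ as bs) / ln 2"

lemma T1_snoc: "length as = i \<Longrightarrow> length bs = i \<Longrightarrow> T1 i (as@[x]) (bs@[y]) =
   JJ as bs * pol i as bs x * gg (bssc \<alpha> \<beta> x (prevb b bs i) y) (PTI \<alpha> \<beta> (prevb b bs i) y)"
  using PA_snoc by (simp add: T1_def phi_def)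

lemma FF_bound_snoc:
  assumes la: "length as = i" and lb: "length bs = i"
  shows "FF (as@[x]) (bs@[y]) \<le> T1 i (as@[x]) (bs@[y]) + T2 i (as@[x]) (bs@[y])"
proof -
  define s where "s = prevb b bs i"
  define p where "p = JJ (as@[x]) (bs@[y])"
  define W where "W = bssc \<alpha> \<beta> x s y"
  define R where "R = PTI \<alpha> \<beta> s y"
  define Jp where "Jp = JJ as bs * pol i as bs x"
  have R: "R > 0" unfolding R_def by (rule PTI_pos)
  have Jp: "Jp \<ge> 0" unfolding Jp_def using la lb vp
    by (intro mult_nonneg_nonneg joint_nonneg pol_nonneg) auto
  have W: "W \<ge> 0" unfolding W_def by (rule bssc_nonneg)
  have p: "p = Jp * W" unfolding p_def Jp_def W_def s_def using joint_snoc[OF vp la lb] by simp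
  have PA: "PA (as@[x]) bs = Jp" unfolding Jp_def using PA_snoc[OF la lb] .
  have T1: "T1 i (as@[x]) (bs@[y]) = Jp * gg W R"
    using PA by (simp add: T1_def phi_def W_def R_def s_def)
  have T2: "T2 i (as@[x]) (bs@[y]) = (p * R * PP bs / PP (bs@[y]) - p) / ln 2"
    unfolding T2_def p_def R_def s_def by simp
  have FF: "FF (as@[x]) (bs@[y]) = (if p = 0 then 0 else p * log 2 ((p * PP bs) / (Jp * PP (bs@[y]))))"
    using PA by (simp add: FF_def p_def[symmetric] Let_def)
  show ?thesis
  proof (cases "p = 0")
    case True
    have z: "Jp * gg W R = 0"
      using True unfolding p gg_def by auto
    have f0: "FF (as@[x]) (bs@[y]) = 0" unfolding FF using True by simp
    have t0: "T2 i (as@[x]) (bs@[y]) = 0" unfolding T2 using True by simp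
    show ?thesis using f0 t0 T1 z by linarith
  next
    case False
    have pp: "p > 0" using False p Jp W by simp
    hence Jpp: "Jp > 0" and Wp: "W > 0" using p Jp W
      by (auto simp: zero_less_mult_iff)
    have "JJ as bs > 0" using Jpp unfolding Jp_def using la lb vp
      by (metis joint_nonneg less_eq_real_def mult_zero_left)
    hence P1: "PP bs > 0" using J_le_P[of as bs] la lb by simp
    have P2: "PP (bs@[y]) > 0" using pp J_le_P[of "as@[x]" "bs@[y]"] la lb unfolding p_def by simp
    have eq: "(p * PP bs) / (Jp * PP (bs@[y])) = (W / R) * (R * PP bs / PP (bs@[y]))"
      using Jpp R P2 unfolding p by (simp add: field_simps)
    have "log 2 ((p * PP bs) / (Jp * PP (bs@[y]))) = log 2 (W / R) + log 2 (R * PP bs / PP (bs@[y]))"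
      unfolding eq using Wp R P1 P2 by (intro log_mult_pos) auto
    also have "\<dots> \<le> log 2 (W / R) + (R * PP bs / PP (bs@[y]) - 1) / ln 2"
      using log2_le[of "R * PP bs / PP (bs@[y])"] R P1 P2 by simp
    finally have L: "log 2 ((p * PP bs) / (Jp * PP (bs@[y]))) \<le> log 2 (W / R) + (R * PP bs / PP (bs@[y]) - 1) / ln 2" .
    have "FF (as@[x]) (bs@[y]) = p * log 2 ((p * PP bs) / (Jp * PP (bs@[y])))"
      unfolding FF using False by simp
    also have "\<dots> \<le> p * (log 2 (W / R) + (R * PP bs / PP (bs@[y]) - 1) / ln 2)"
      using L pp by (simp add: mult_left_mono)
    also have "\<dots> = Jp * gg W R + (p * R * PP bs / PP (bs@[y]) - p) / ln 2"
      unfolding gg_def using Wp p by (simp add: field_simps)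
    finally show ?thesis unfolding T1 T2 .
  qed
qed

lemma FF_bound:
  assumes "as \<in> blists (Suc i)" "bs \<in> blists (Suc i)"
  shows "FF as bs \<le> T1 i as bs + T2 i as bs"
proof -
  obtain as' x where a: "as = as'@[x]" "as' \<in> blists i"
    using assms(1) unfolding blists_Suc by auto
  obtain bs' y where bb: "bs = bs'@[y]" "bs' \<in> blists i"
    using assms(2) unfolding blists_Suc by auto
  show ?thesis unfolding a bb using FF_bound_snoc a bb by (auto simp: blists_def)
qed

lemma sum_T1: "(\<Sum>as\<in>blists (Suc i). \<Sum>bs\<in>blists (Suc i). T1 i as bs) = cap"
proof -
  have "(\<Sum>as\<in>blists (Suc i). \<Sum>bs\<in>blists (Suc i). T1 i as bs)
     = (\<Sum>as\<in>blists i. \<Sum>x\<in>UNIV. \<Sum>bs\<in>blists i. \<Sum>y\<in>UNIV. T1 i (as@[x]) (bs@[y]))"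
    by (simp add: sum_blists_Suc)
  also have "\<dots> = (\<Sum>as\<in>blists i. \<Sum>x\<in>UNIV. \<Sum>bs\<in>blists i. JJ as bs * pol i as bs x * cap)"
  proof (intro sum.cong refl)
    fix as x bs assume "as \<in> blists i" "bs \<in> blists i"
    hence la: "length as = i" and lb: "length bs = i" by (auto simp: blists_def)
    show "(\<Sum>y\<in>UNIV. T1 i (as@[x]) (bs@[y])) = JJ as bs * pol i as bs x * cap"
      unfolding T1_def sum_bool using PA_snoc[OF la lb, of x]
      by (simp add: distrib_left[symmetric] phi_sum)
  qed
  also have "\<dots> = (\<Sum>as\<in>blists i. \<Sum>bs\<in>blists i. \<Sum>x\<in>UNIV. JJ as bs * pol i as bs x * cap)"
    by (intro sum.cong refl) (rule sum.swap)
  also have "\<dots> = (\<Sum>as\<in>blists i. \<Sum>bs\<in>blists i. JJ as bs) * cap"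
    unfolding sum_distrib_right
  proof (intro sum.cong refl)
    fix as bs assume "as \<in> blists i" "bs \<in> blists i"
    hence la: "length as = i" and lb: "length bs = i" by (auto simp: blists_def)
    show "(\<Sum>x\<in>UNIV. JJ as bs * pol i as bs x * cap) = JJ as bs * cap"
      unfolding sum_bool using pol_sum[OF vp la lb]
      by (metis (no_types, lifting) distrib_left distrib_right mult.right_neutral)
  qed
  also have "\<dots> = cap" using joint_total[OF vp] by simp
  finally show ?thesis .
qed

lemma sum_T2: "(\<Sum>as\<in>blists (Suc i). \<Sum>bs\<in>blists (Suc i). T2 i as bs) \<le> 0"
proof -
  let ?R = "\<lambda>bs. PTI \<alpha> \<beta> (prevb b (butlast bs) i) (last bs)"
  have "(\<Sum>as\<in>blists (Suc i). \<Sum>bs\<in>blists (Suc i). T2 i as bs)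
     = ((\<Sum>bs\<in>blists (Suc i). \<Sum>as\<in>blists (Suc i). JJ as bs * (?R bs * PP (butlast bs) / PP bs))
        - (\<Sum>as\<in>blists (Suc i). \<Sum>bs\<in>blists (Suc i). JJ as bs)) / ln 2"
    unfolding T2_def sum_divide_distrib[symmetric] sum_subtractf
    by (subst sum.swap[of _ "blists (Suc i)" "blists (Suc i)"]) (simp add: algebra_simps)
  also have "(\<Sum>as\<in>blists (Suc i). \<Sum>bs\<in>blists (Suc i). JJ as bs) = 1"
    by (rule joint_total[OF vp])
  also have "(\<Sum>bs\<in>blists (Suc i). \<Sum>as\<in>blists (Suc i). JJ as bs * (?R bs * PP (butlast bs) / PP bs))
      \<le> (\<Sum>bs\<in>blists (Suc i). ?R bs * PP (butlast bs))"
  proof (rule sum_mono)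
    fix bs assume bs: "bs \<in> blists (Suc i)"
    have Pbs: "PP bs = (\<Sum>as\<in>blists (Suc i). JJ as bs)" unfolding pB_def using bs
      by (simp add: blists_def)
    have "(\<Sum>as\<in>blists (Suc i). JJ as bs * (?R bs * PP (butlast bs) / PP bs))
        = PP bs * (?R bs * PP (butlast bs) / PP bs)"
      unfolding Pbs sum_distrib_right ..
    also have "\<dots> \<le> ?R bs * PP (butlast bs)"
      using P_nonneg[of "butlast bs"] less_imp_le[OF PTI_pos]
      by (cases "PP bs = 0") simp_all
    finally show "(\<Sum>as\<in>blists (Suc i). JJ as bs * (?R bs * PP (butlast bs) / PP bs))
        \<le> ?R bs * PP (butlast bs)" .
  qed
  also have "(\<Sum>bs\<in>blists (Suc i). ?R bs * PP (butlast bs)) = 1"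
  proof -
    have "(\<Sum>bs\<in>blists (Suc i). ?R bs * PP (butlast bs))
        = (\<Sum>bs\<in>blists i. \<Sum>y\<in>UNIV. PTI \<alpha> \<beta> (prevb b bs i) y * PP bs)"
      by (simp add: sum_blists_Suc)
    also have "\<dots> = (\<Sum>bs\<in>blists i. PP bs)"
      unfolding sum_bool distrib_right[symmetric] PTI_sum by simp
    also have "\<dots> = 1" by (rule pB_total[OF vp])
    finally show ?thesis .
  qed
  finally show ?thesis by (simp add: divide_right_mono)
qed

lemma cmi_le: "cmi \<alpha> \<beta> pol b i \<le> cap"
proof -
  have "cmi \<alpha> \<beta> pol b i \<le> (\<Sum>as\<in>blists (Suc i). \<Sum>bs\<in>blists (Suc i). T1 i as bs + T2 i as bs)"
    unfolding cmi_FF by (intro sum_mono FF_bound)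
  also have "\<dots> = (\<Sum>as\<in>blists (Suc i). \<Sum>bs\<in>blists (Suc i). T1 i as bs)
      + (\<Sum>as\<in>blists (Suc i). \<Sum>bs\<in>blists (Suc i). T2 i as bs)"
    by (simp add: sum.distrib)
  finally show ?thesis using sum_T1[of i] sum_T2[of i] by linarith
qed

end
end


context bsscp
begin

lemma mix: "(if True = s then nu else 1 - nu) * bssc \<alpha> \<beta> True s y
          + (if False = s then nu else 1 - nu) * bssc \<alpha> \<beta> False s y = PTI \<alpha> \<beta> s y"
  using lam_eq by (cases s; cases y) (simp_all add: bssc_def PTI_def algebra_simps)

context
  fixes pol :: policy and b :: bool and i :: nat
  assumes vp: "valid_policy pol"
    and pti: "\<And>as bs x. length as = i \<Longrightarrow> length bs = i \<Longrightarrow>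
                pol i as bs x = (if x = prevb b bs i then nu else 1 - nu)"
begin

lemma markov_snoc:
  assumes lb: "length bs = i"
  shows "PP pol b (bs@[y]) = PP pol b bs * PTI \<alpha> \<beta> (prevb b bs i) y"
proof -
  have "PP pol b (bs@[y]) = (\<Sum>as\<in>blists i. \<Sum>x\<in>UNIV. JJ pol b (as@[x]) (bs@[y]))"
    by (rule P_snoc[OF vp lb])
  also have "\<dots> = (\<Sum>as\<in>blists i. JJ pol b as bs * PTI \<alpha> \<beta> (prevb b bs i) y)"
  proof (rule sum.cong[OF refl])
    fix as assume "as \<in> blists i"
    hence la: "length as = i" by (simp add: blists_def)
    show "(\<Sum>x\<in>UNIV. JJ pol b (as@[x]) (bs@[y])) = JJ pol b as bs * PTI \<alpha> \<beta> (prevb b bs i) y"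
      unfolding sum_bool joint_snoc[OF vp la lb] pti[OF la lb] mix[symmetric, of "prevb b bs i" y]
      by (simp add: algebra_simps)
  qed
  also have "\<dots> = PP pol b bs * PTI \<alpha> \<beta> (prevb b bs i) y"
    unfolding pB_def lb sum_distrib_right ..
  finally show ?thesis .
qed

lemma FF_eq_snoc:
  assumes la: "length as = i" and lb: "length bs = i"
  shows "FF pol b (as@[x]) (bs@[y]) = T1 pol b i (as@[x]) (bs@[y])"
proof -
  define s where "s = prevb b bs i"
  define p where "p = JJ pol b (as@[x]) (bs@[y])"
  define W where "W = bssc \<alpha> \<beta> x s y"
  define R where "R = PTI \<alpha> \<beta> s y"
  define Jp where "Jp = JJ pol b as bs * pol i as bs x"
  have R: "R > 0" unfolding R_def by (rule PTI_pos)
  have Jp: "Jp \<ge> 0" unfolding Jp_def using la lb vp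
    by (intro mult_nonneg_nonneg joint_nonneg pol_nonneg) auto
  have W: "W \<ge> 0" unfolding W_def by (rule bssc_nonneg)
  have p: "p = Jp * W" unfolding p_def Jp_def W_def s_def using joint_snoc[OF vp la lb] by simp
  have PA: "PA pol b (as@[x]) bs = Jp" unfolding Jp_def using PA_snoc[OF vp la lb] .
  have T1: "T1 pol b i (as@[x]) (bs@[y]) = Jp * gg W R"
    unfolding T1_snoc[OF vp la lb] Jp_def W_def R_def s_def ..
  have FF: "FF pol b (as@[x]) (bs@[y]) = (if p = 0 then 0 else p * log 2 ((p * PP pol b bs) / (Jp * PP pol b (bs@[y]))))"
    using PA vp by (simp add: FF_def p_def[symmetric] Let_def)
  have M: "PP pol b (bs@[y]) = PP pol b bs * R" unfolding R_def s_def by (rule markov_snoc[OF lb])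
  show ?thesis
  proof (cases "p = 0")
    case True
    have z: "Jp * gg W R = 0"
      using True unfolding p gg_def by auto
    have f0: "FF pol b (as@[x]) (bs@[y]) = 0" unfolding FF using True by simp
    show ?thesis using f0 T1 z by linarith
  next
    case False
    have pp: "p > 0" using False p Jp W by simp
    hence Jpp: "Jp > 0" and Wp: "W > 0" using p Jp W
      by (auto simp: zero_less_mult_iff)
    have "JJ pol b as bs > 0" using Jpp unfolding Jp_def using la lb vp
      by (metis joint_nonneg less_eq_real_def mult_zero_left)
    hence P1: "PP pol b bs > 0" using J_le_P[OF vp, where b=b and as=as and bs=bs] la lb by simp
    have eq: "(p * PP pol b bs) / (Jp * PP pol b (bs@[y])) = W / R"
      using Jpp R P1 unfolding p M by (simp add: field_simps)
    show ?thesis unfolding FF T1 eq using False Wp unfolding p gg_def by simp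
  qed
qed

lemma cmi_eq: "cmi \<alpha> \<beta> pol b i = cap"
proof -
  have "cmi \<alpha> \<beta> pol b i = (\<Sum>as\<in>blists (Suc i). \<Sum>bs\<in>blists (Suc i). T1 pol b i as bs)"
    unfolding cmi_FF[OF vp]
  proof (intro sum.cong refl)
    fix as bs assume a: "as \<in> blists (Suc i)" and bb: "bs \<in> blists (Suc i)"
    obtain as' x where a': "as = as'@[x]" "as' \<in> blists i"
      using a unfolding blists_Suc by auto
    obtain bs' y where b': "bs = bs'@[y]" "bs' \<in> blists i"
      using bb unfolding blists_Suc by auto
    show "FF pol b as bs = T1 pol b i as bs"
      unfolding a' b' using FF_eq_snoc a' b' by (auto simp: blists_def)
  qed
  also have "\<dots> = cap" by (rule sum_T1[OF vp])
  finally show ?thesis .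
qed

end

lemma piTI_valid: "valid_policy (piTI \<alpha> \<beta> b0)"
  unfolding valid_policy_def piTI_def using nu_range by auto

lemma dirinfo_le: "valid_policy pol \<Longrightarrow> dirinfo \<alpha> \<beta> pol b0 n \<le> real (n + 1) * cap"
  unfolding dirinfo_def using cmi_le[of pol b0] sum_bounded_above[of "{..n}" "cmi \<alpha> \<beta> pol b0" cap]
  by simp

lemma dirinfo_piTI: "dirinfo \<alpha> \<beta> (piTI \<alpha> \<beta> b0) b0 n = real (n + 1) * cap"
proof -
  have "\<And>i. cmi \<alpha> \<beta> (piTI \<alpha> \<beta> b0) b0 i = cap"
    by (rule cmi_eq[OF piTI_valid]) (simp add: piTI_def)
  then show ?thesis unfolding dirinfo_def by simp
qed

end

theorem mainTheorem9:
  fixes \<alpha> \<beta> :: real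
  assumes "0 \<le> \<alpha>" "\<alpha> \<le> 1" "0 \<le> \<beta>" "\<beta> \<le> 1" "\<alpha> + \<beta> \<noteq> 1"
  shows
    "(\<forall>n b0.
        valid_policy (piTI \<alpha> \<beta> b0)
      \<and> (\<forall>pol. valid_policy pol \<longrightarrow> dirinfo \<alpha> \<beta> pol b0 n \<le> dirinfo \<alpha> \<beta> (piTI \<alpha> \<beta> b0) b0 n)
      \<and> CFB \<alpha> \<beta> n b0 = dirinfo \<alpha> \<beta> (piTI \<alpha> \<beta> b0) b0 n
      \<and> (\<forall>i\<le>n. \<forall>bs. length bs = Suc i \<longrightarrow>
           pB \<alpha> \<beta> (piTI \<alpha> \<beta> b0) b0 bs =
             pB \<alpha> \<beta> (piTI \<alpha> \<beta> b0) b0 (butlast bs) * PTI \<alpha> \<beta> (prevb b0 bs i) (bs ! i))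
      \<and> (\<forall>p\<in>{0..1}. I0 \<alpha> \<beta> b0 p \<le> bssc_cap \<alpha> \<beta>)
      \<and> (\<exists>p\<in>{0..1}. I0 \<alpha> \<beta> b0 p = bssc_cap \<alpha> \<beta>)
      \<and> CFB \<alpha> \<beta> n b0 = real (n + 1) * bssc_cap \<alpha> \<beta>)
   \<and> (\<forall>b0. (\<lambda>n. CFB \<alpha> \<beta> n b0 / real (n + 1)) \<longlonglongrightarrow> bssc_cap \<alpha> \<beta>)"
proof -
  interpret bsscp \<alpha> \<beta> using assms by unfold_locales
  have CFB: "CFB \<alpha> \<beta> n b0 = real (n + 1) * cap" for n b0
    unfolding CFB_def
  proof (rule cSup_eq_maximum)
    show "real (n + 1) * cap \<in> (\<lambda>pol. dirinfo \<alpha> \<beta> pol b0 n) ` {pol. valid_policy pol}"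
      using dirinfo_piTI[of b0 n] piTI_valid[of b0] by (metis image_eqI mem_Collect_eq)
  next
    fix x assume "x \<in> (\<lambda>pol. dirinfo \<alpha> \<beta> pol b0 n) ` {pol. valid_policy pol}"
    then show "x \<le> real (n + 1) * cap" using dirinfo_le by auto
  qed
  have part1: "valid_policy (piTI \<alpha> \<beta> b0)
      \<and> (\<forall>pol. valid_policy pol \<longrightarrow> dirinfo \<alpha> \<beta> pol b0 n \<le> dirinfo \<alpha> \<beta> (piTI \<alpha> \<beta> b0) b0 n)
      \<and> CFB \<alpha> \<beta> n b0 = dirinfo \<alpha> \<beta> (piTI \<alpha> \<beta> b0) b0 n
      \<and> (\<forall>i\<le>n. \<forall>bs. length bs = Suc i \<longrightarrow>
           pB \<alpha> \<beta> (piTI \<alpha> \<beta> b0) b0 bs =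
             pB \<alpha> \<beta> (piTI \<alpha> \<beta> b0) b0 (butlast bs) * PTI \<alpha> \<beta> (prevb b0 bs i) (bs ! i))
      \<and> (\<forall>p\<in>{0..1}. I0 \<alpha> \<beta> b0 p \<le> bssc_cap \<alpha> \<beta>)
      \<and> (\<exists>p\<in>{0..1}. I0 \<alpha> \<beta> b0 p = bssc_cap \<alpha> \<beta>)
      \<and> CFB \<alpha> \<beta> n b0 = real (n + 1) * bssc_cap \<alpha> \<beta>" for n b0
  proof (intro conjI allI impI ballI)
    show "valid_policy (piTI \<alpha> \<beta> b0)" by (rule piTI_valid)
    show "dirinfo \<alpha> \<beta> pol b0 n \<le> dirinfo \<alpha> \<beta> (piTI \<alpha> \<beta> b0) b0 n" if "valid_policy pol" for pol
      using dirinfo_le[OF that] dirinfo_piTI by simp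
    show "CFB \<alpha> \<beta> n b0 = dirinfo \<alpha> \<beta> (piTI \<alpha> \<beta> b0) b0 n" using CFB dirinfo_piTI by simp
    show "CFB \<alpha> \<beta> n b0 = real (n + 1) * cap" by (rule CFB)
    fix i and bs :: "bool list" assume "i \<le> n" and lb: "length bs = Suc i"
    have bs: "bs = butlast bs @ [last bs]" using lb
      by (metis append_butlast_last_id list.size(3) nat.distinct(1))
    have lb': "length (butlast bs) = i" using lb by simp
    have m: "pB \<alpha> \<beta> (piTI \<alpha> \<beta> b0) b0 (butlast bs @ [last bs]) =
          pB \<alpha> \<beta> (piTI \<alpha> \<beta> b0) b0 (butlast bs) * PTI \<alpha> \<beta> (prevb b0 (butlast bs) i) (last bs)"
      by (rule markov_snoc[OF piTI_valid _ lb']) (simp add: piTI_def)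
    have pv: "prevb b0 bs i = prevb b0 (butlast bs) i"
      using lb by (simp add: prevb_def nth_butlast)
    have bi: "bs ! i = last bs" using lb by (cases bs rule: rev_cases) (auto simp: nth_append)
    show "pB \<alpha> \<beta> (piTI \<alpha> \<beta> b0) b0 bs =
             pB \<alpha> \<beta> (piTI \<alpha> \<beta> b0) b0 (butlast bs) * PTI \<alpha> \<beta> (prevb b0 bs i) (bs ! i)"
      using m unfolding bs[symmetric] pv bi .
  next
    fix p :: real assume "p \<in> {0..1}"
    hence "valid_policy (\<lambda>_ _ _ a. if a then p else 1 - p)"
      unfolding valid_policy_def by auto
    then show "I0 \<alpha> \<beta> b0 p \<le> cap" unfolding I0_def by (rule cmi_le)
  next
    let ?p = "if b0 then nu else 1 - nu"
    have vp: "valid_policy (\<lambda>_ _ _ a. if a then ?p else 1 - ?p)"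
      unfolding valid_policy_def using nu_range by auto
    have "I0 \<alpha> \<beta> b0 ?p = cap" unfolding I0_def
      by (rule cmi_eq[OF vp]) (auto simp: prevb_def)
    moreover have "?p \<in> {0..1}" using nu_range by auto
    ultimately show "\<exists>p\<in>{0..1}. I0 \<alpha> \<beta> b0 p = cap" by blast
  qed
  show ?thesis
  proof (rule conjI)
    show "\<forall>n b0. valid_policy (piTI \<alpha> \<beta> b0)
      \<and> (\<forall>pol. valid_policy pol \<longrightarrow> dirinfo \<alpha> \<beta> pol b0 n \<le> dirinfo \<alpha> \<beta> (piTI \<alpha> \<beta> b0) b0 n)
      \<and> CFB \<alpha> \<beta> n b0 = dirinfo \<alpha> \<beta> (piTI \<alpha> \<beta> b0) b0 n
      \<and> (\<forall>i\<le>n. \<forall>bs. length bs = Suc i \<longrightarrow>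
           pB \<alpha> \<beta> (piTI \<alpha> \<beta> b0) b0 bs =
             pB \<alpha> \<beta> (piTI \<alpha> \<beta> b0) b0 (butlast bs) * PTI \<alpha> \<beta> (prevb b0 bs i) (bs ! i))
      \<and> (\<forall>p\<in>{0..1}. I0 \<alpha> \<beta> b0 p \<le> bssc_cap \<alpha> \<beta>)
      \<and> (\<exists>p\<in>{0..1}. I0 \<alpha> \<beta> b0 p = bssc_cap \<alpha> \<beta>)
      \<and> CFB \<alpha> \<beta> n b0 = real (n + 1) * bssc_cap \<alpha> \<beta>"
      using part1 by blast
  next
    show "\<forall>b0. (\<lambda>n. CFB \<alpha> \<beta> n b0 / real (n + 1)) \<longlonglongrightarrow> cap"
    proof
    fix b0
    have "(\<lambda>n. CFB \<alpha> \<beta> n b0 / real (n + 1)) = (\<lambda>n. cap)"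
      using CFB by (simp del: of_nat_Suc)
    then show "(\<lambda>n. CFB \<alpha> \<beta> n b0 / real (n + 1)) \<longlonglongrightarrow> cap" by simp
    qed
  qed
qed


end
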